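(* Let $D\subseteq\mathbb{R}^{p+2}$ be an open set invariant under $(\mathbf{x}_p,r)\mapsto(\mathbf{x}_p,-r)$ and let $f$ be a generalized partial-slice function on $\Omega_D$ induced by a $C^1$ stem function, with $f\in C^1(\Omega_D,\mathbb{A})$. Then on $\Omega_D\setminus\mathbb{R}^{p+1}$: (i) $\Gamma f(\mathbf{x})=(q-1)\,\underline{\mathbf{x}}_q f'_s(\mathbf{x})$; (ii) $(D_{\mathbf{x}}-D_{\underline{\omega}})f(\mathbf{x})=(1-q)f'_s(\mathbf{x})$.
   Context: Let $\mathbb{A}$ be a real alternative algebra (the associator $[a,b,c]=(ab)c-a(bc)$ is an alternating trilinear function) with unity $1$, of finite real dimension $d>1$, equipped with an anti-involution $a\mapsto a^c$ (real linear, $a^c=a$ for real $a$, $(a^c)^c=a$, $(ab)^c=b^ca^c$). Let $t(x)=x+x^c$, $n(x)=xx^c$, $\mathbb{S}_{\mathbb{A}}=\{x: t(x)=0,\ n(x)=1\}$ (assumed nonempty) and $Q_{\mathbb{A}}=\mathbb{R}\cup\{x: t(x)\in\mathbb{R},\ n(x)\in\mathbb{R},\ 4n(x)>t(x)^2\}$. Let $M$ be a real subspace with $\mathbb{R}\subsetneq M\subseteq Q_{\mathbb{A}}$ having a basis $(v_0,\dots,v_m)$, $m\ge1$, $v_0=1$, $v_s\in\mathbb{S}_{\mathbb{A}}$, $v_sv_t=-v_tv_s$ for distinct $s,t\ge1$; complete it to a basis of $\mathbb{A}$ with associated Euclidean norm. Identify $x=\sum x_sv_s\in M$ with $(x_0,\dots,x_m)\in\mathbb{R}^{m+1}$;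 differentiate componentwise. Fix $p\in\{0,\dots,m-1\}$, $q=m-p$; $\mathbf{x}=\mathbf{x}_p+\underline{\mathbf{x}}_q$ with $\mathbf{x}_p=\sum_{s=0}^px_sv_s\in\mathbb{R}^{p+1}$, $\underline{\mathbf{x}}_q=\sum_{s=p+1}^m x_sv_s$; $\mathbb{S}=\{\sum_{s=p+1}^m x_sv_s:\sum x_s^2=1\}$; $\underline{\mathbf{x}}_q=r\underline{\omega}$, $r=|\underline{\mathbf{x}}_q|$, $\underline{\omega}\in\mathbb{S}$; $\mathbf{x}'=(\mathbf{x}_p,r)$, $\mathbf{x}_\diamond=\mathbf{x}_p-\underline{\mathbf{x}}_q$. $D_{\mathbf{x}_p}f=\sum_{s=0}^p v_s\partial_{x_s}f$, $D_{\mathbf{x}}f=\sum_{s=0}^mv_s\partial_{x_s}f$; for $\mathbf{x}=\mathbf{x}_p+r\underline{\omega}$, $D_{\underline{\omega}}f(\mathbf{x})=(D_{\mathbf{x}_p}+\underline{\omega}\partial_r)f(\mathbf{x}_p+r\underline{\omega})$ (computed on the slice $\mathbb{R}^{p+1}\oplus\underline{\omega}\mathbb{R}$). Spherical Dirac operator: $\Gamma f=-\frac12\sum_{i,j=p+1}^{m}v_i(v_j(L_{ij}f))$ with $L_{ij}=x_i\partial_{x_j}-x_j\partial_{x_i}$. For open $D\subseteq\mathbb{R}^{p+2}$ invariant under $(\mathbf{x}_p,r)\mapsto(\mathbf{x}_p,-r)$, $\Omega_D=\{\mathbf{x}_p+r\underline{\omega}:(\mathbf{x}_p,r)\in D,\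 r\ge0,\ \underline{\omega}\in\mathbb{S}\}$. A stem function $(F_1,F_2):D\to\mathbb{A}^2$ has $F_1$ even and $F_2$ odd in $r$, and induces the generalized partial-slice function $f(\mathbf{x}_p+r\underline{\omega})=F_1(\mathbf{x}')+\underline{\omega}F_2(\mathbf{x}')$. Spherical derivative: $f'_s(\mathbf{x})=\frac12\underline{\mathbf{x}}_q^{-1}(f(\mathbf{x})-f(\mathbf{x}_\diamond))$ for $\mathbf{x}\in\Omega_D\setminus\mathbb{R}^{p+1}$. *)

theory Defs
  imports "HOL-Analysis.Analysis"
begin

definition assoc :: "('a::real_vector \<Rightarrow> 'a \<Rightarrow> 'a) \<Rightarrow> 'a \<Rightarrow> 'a \<Rightarrow> 'a \<Rightarrow> 'a" where
  "assoc mul a b c = mul (mul a b) c - mul a (mul b c)"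

definition is_real :: "'a::real_vector \<Rightarrow> 'a \<Rightarrow> bool" where
  "is_real one a \<longleftrightarrow> (\<exists>c::real. a = c *\<^sub>R one)"

definition alt_algebra_inv ::
  "('a::real_vector \<Rightarrow> 'a \<Rightarrow> 'a) \<Rightarrow> 'a \<Rightarrow> ('a \<Rightarrow> 'a) \<Rightarrow> bool" where
  "alt_algebra_inv mul one cj \<longleftrightarrow>
     bilinear mul \<and>
     (\<forall>a. mul one a = a \<and> mul a one = a) \<and>
     (\<forall>a b. assoc mul a a b = 0 \<and> assoc mul a b a = 0 \<and> assoc mul b a a = 0) \<and>
     linear cj \<and>
     (\<forall>a. is_real one a \<longrightarrow> cj a = a) \<and>
     (\<forall>a. cj (cj a) = a) \<and>
     (\<forall>a b. cj (mul a b) = mul (cj b) (cj a))"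

definition trace :: "('a::real_vector \<Rightarrow> 'a) \<Rightarrow> 'a \<Rightarrow> 'a" where
  "trace cj x = x + cj x"

definition anorm :: "('a::real_vector \<Rightarrow> 'a \<Rightarrow> 'a) \<Rightarrow> ('a \<Rightarrow> 'a) \<Rightarrow> 'a \<Rightarrow> 'a" where
  "anorm mul cj x = mul x (cj x)"

definition SA :: "('a::real_vector \<Rightarrow> 'a \<Rightarrow> 'a) \<Rightarrow> 'a \<Rightarrow> ('a \<Rightarrow> 'a) \<Rightarrow> 'a set" where
  "SA mul one cj = {x. trace cj x = 0 \<and> anorm mul cj x = one}"

definition QA :: "('a::real_vector \<Rightarrow> 'a \<Rightarrow> 'a) \<Rightarrow> 'a \<Rightarrow> ('a \<Rightarrow> 'a) \<Rightarrow> 'a set" where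
  "QA mul one cj = {x. is_real one x} \<union>
     {x. \<exists>a b::real. trace cj x = a *\<^sub>R one \<and> anorm mul cj x = b *\<^sub>R one \<and> 4 * b > a\<^sup>2}"

definition ainv :: "('a \<Rightarrow> 'a \<Rightarrow> 'a) \<Rightarrow> 'a \<Rightarrow> 'a \<Rightarrow> 'a" where
  "ainv mul one x = (THE y. mul x y = one \<and> mul y x = one)"

definition pdir :: "('b::real_normed_vector \<Rightarrow> 'c::real_normed_vector) \<Rightarrow> 'b \<Rightarrow> 'b \<Rightarrow> 'c" where
  "pdir g u z = vector_derivative (\<lambda>t. g (z + t *\<^sub>R u)) (at 0)"

definition C1_dirs :: "'b::real_normed_vector set \<Rightarrow> 'b set \<Rightarrow> ('b \<Rightarrow> 'c::real_normed_vector) \<Rightarrow> bool" where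
  "C1_dirs U S g \<longleftrightarrow>
     (\<forall>u\<in>U. (\<forall>z\<in>S. (\<lambda>t. g (z + t *\<^sub>R u)) differentiable (at 0)) \<and> continuous_on S (pdir g u))"

text \<open>Unit sphere of the q-part, with respect to the Euclidean norm in which v is orthonormal.\<close>
definition sphq :: "(nat \<Rightarrow> 'a::real_vector) \<Rightarrow> nat \<Rightarrow> nat \<Rightarrow> 'a set" where
  "sphq v p m = {(\<Sum>s\<in>{p+1..m}. c s *\<^sub>R v s) | c. (\<Sum>s\<in>{p+1..m}. (c s)\<^sup>2) = 1}"

definition OmegaD :: "(nat \<Rightarrow> 'a::real_vector) \<Rightarrow> nat \<Rightarrow> nat \<Rightarrow> ('a \<times> real) set \<Rightarrow> 'a set" where
  "OmegaD v p m D = {y + r *\<^sub>R w | y r w. (y, r) \<in> D \<and> r \<ge> 0 \<and> w \<in> sphq v p m}"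

definition pt :: "(nat \<Rightarrow> 'a::real_vector) \<Rightarrow> nat \<Rightarrow> (nat \<Rightarrow> real) \<Rightarrow> 'a" where
  "pt v m xc = (\<Sum>s\<in>{0..m}. xc s *\<^sub>R v s)"

definition xpart :: "(nat \<Rightarrow> 'a::real_vector) \<Rightarrow> nat \<Rightarrow> (nat \<Rightarrow> real) \<Rightarrow> 'a" where
  "xpart v p xc = (\<Sum>s\<in>{0..p}. xc s *\<^sub>R v s)"

definition xqpart :: "(nat \<Rightarrow> 'a::real_vector) \<Rightarrow> nat \<Rightarrow> nat \<Rightarrow> (nat \<Rightarrow> real) \<Rightarrow> 'a" where
  "xqpart v p m xc = (\<Sum>s\<in>{p+1..m}. xc s *\<^sub>R v s)"

definition rad :: "nat \<Rightarrow> nat \<Rightarrow> (nat \<Rightarrow> real) \<Rightarrow> real" where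
  "rad p m xc = sqrt (\<Sum>s\<in>{p+1..m}. (xc s)\<^sup>2)"

definition sph_deriv ::
  "('a::real_vector \<Rightarrow> 'a \<Rightarrow> 'a) \<Rightarrow> 'a \<Rightarrow> (nat \<Rightarrow> 'a) \<Rightarrow> nat \<Rightarrow> nat \<Rightarrow> ('a \<Rightarrow> 'a) \<Rightarrow> (nat \<Rightarrow> real) \<Rightarrow> 'a" where
  "sph_deriv mul one v p m f xc =
     (1/2) *\<^sub>R mul (ainv mul one (xqpart v p m xc))
        (f (pt v m xc) - f (xpart v p xc - xqpart v p m xc))"

definition Gamma_op ::
  "('a::real_normed_vector \<Rightarrow> 'a \<Rightarrow> 'a) \<Rightarrow> (nat \<Rightarrow> 'a) \<Rightarrow> nat \<Rightarrow> nat \<Rightarrow> ('a \<Rightarrow> 'a) \<Rightarrow> (nat \<Rightarrow> real) \<Rightarrow> 'a" where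
  "Gamma_op mul v p m f xc =
     - (1/2) *\<^sub>R (\<Sum>i\<in>{p+1..m}. \<Sum>j\<in>{p+1..m}.
        mul (v i) (mul (v j)
          (xc i *\<^sub>R pdir f (v j) (pt v m xc) - xc j *\<^sub>R pdir f (v i) (pt v m xc))))"

definition Dx_op ::
  "('a::real_normed_vector \<Rightarrow> 'a \<Rightarrow> 'a) \<Rightarrow> (nat \<Rightarrow> 'a) \<Rightarrow> nat \<Rightarrow> ('a \<Rightarrow> 'a) \<Rightarrow> (nat \<Rightarrow> real) \<Rightarrow> 'a" where
  "Dx_op mul v m f xc = (\<Sum>s\<in>{0..m}. mul (v s) (pdir f (v s) (pt v m xc)))"

definition Domega_op ::
  "('a::real_normed_vector \<Rightarrow> 'a \<Rightarrow> 'a) \<Rightarrow> (nat \<Rightarrow> 'a) \<Rightarrow> nat \<Rightarrow> nat \<Rightarrow> ('a \<Rightarrow> 'a) \<Rightarrow> (nat \<Rightarrow> real) \<Rightarrow> 'a" where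
  "Domega_op mul v p m f xc =
     (let r = rad p m xc; w = (1 / r) *\<^sub>R xqpart v p m xc; y = xpart v p xc in
      (\<Sum>s\<in>{0..p}. mul (v s) (pdir (\<lambda>z. f z) (v s) (y + r *\<^sub>R w)))
      + mul w (vector_derivative (\<lambda>t. f (y + t *\<^sub>R w)) (at r)))"

end

theory Submission
  imports Defs
begin



lemma dsum_anti:
  fixes a :: "'i \<Rightarrow> 'i \<Rightarrow> 'b::ab_group_add"
  assumes "finite I" "\<And>i j. i \<in> I \<Longrightarrow> j \<in> I \<Longrightarrow> i \<noteq> j \<Longrightarrow> a i j + a j i = 0"
  shows "(\<Sum>i\<in>I. \<Sum>j\<in>I. a i j) = (\<Sum>i\<in>I. a i i)"
  using assms
proof (induction I rule: finite_induct)
  case empty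
  then show ?case by simp
next
  case (insert x F)
  have c: "(\<Sum>j\<in>F. a x j) + (\<Sum>i\<in>F. a i x) = 0"
  proof -
    have "(\<Sum>j\<in>F. a x j) + (\<Sum>i\<in>F. a i x) = (\<Sum>j\<in>F. a x j + a j x)"
      by (simp add: sum.distrib)
    also have "\<dots> = 0" using insert by (intro sum.neutral) auto
    finally show ?thesis .
  qed
  have "(\<Sum>i\<in>insert x F. \<Sum>j\<in>insert x F. a i j)
      = a x x + (\<Sum>j\<in>F. a x j) + ((\<Sum>i\<in>F. a i x) + (\<Sum>i\<in>F. \<Sum>j\<in>F. a i j))"
    using insert by (simp add: sum.distrib add.assoc)
  also have "\<dots> = a x x + (\<Sum>i\<in>F. \<Sum>j\<in>F. a i j)" using c
    by (metis (no_types, lifting) add.assoc add.commute add_0)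
  also have "\<dots> = (\<Sum>i\<in>insert x F. a i i)" using insert by simp
  finally show ?case .
qed

lemma alg_bil: "alt_algebra_inv mul one cj \<Longrightarrow> bilinear mul"
  by (simp add: alt_algebra_inv_def)

lemma alg_one: "alt_algebra_inv mul one cj \<Longrightarrow> mul one a = a \<and> mul a one = a"
  by (simp add: alt_algebra_inv_def)

lemma alg_left: "alt_algebra_inv mul one cj \<Longrightarrow> mul a (mul a b) = mul (mul a a) b"
  unfolding alt_algebra_inv_def assoc_def by (metis eq_iff_diff_eq_0)

lemma alg_lin:
  assumes A: "alt_algebra_inv mul one cj"
  shows "mul a (mul b c) + mul b (mul a c) = mul (mul a b + mul b a) c"
proof -
  have B: "bilinear mul" using A by (rule alg_bil)
  have "mul (a+b) (mul (a+b) c) = mul (mul (a+b) (a+b)) c" using A by (rule alg_left)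
  hence "mul a (mul a c) + mul a (mul b c) + (mul b (mul a c) + mul b (mul b c))
       = mul (mul a a) c + mul (mul a b) c + (mul (mul b a) c + mul (mul b b) c)"
    by (simp add: bilinear_ladd[OF B] bilinear_radd[OF B] ac_simps)
  moreover have "mul a (mul a c) = mul (mul a a) c" "mul b (mul b c) = mul (mul b b) c"
    using A by (auto intro: alg_left)
  ultimately show ?thesis by (simp add: bilinear_ladd[OF B] algebra_simps)
qed

lemma alg_SA:
  assumes A: "alt_algebra_inv mul one cj" and "x \<in> SA mul one cj"
  shows "mul x x = - one"
proof -
  have B: "bilinear mul" using A by (rule alg_bil)
  have "cj x = - x" using assms(2) by (simp add: SA_def trace_def eq_neg_iff_add_eq_0 add.commute)
  moreover have "mul x (cj x) = one" using assms(2) by (simp add: SA_def anorm_def)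
  ultimately have "- mul x x = one" by (simp add: bilinear_rneg[OF B])
  thus ?thesis by (metis minus_minus)
qed

locale actx =
  fixes mul :: "'a::euclidean_space \<Rightarrow> 'a \<Rightarrow> 'a" and one :: 'a and cj :: "'a \<Rightarrow> 'a"
    and v :: "nat \<Rightarrow> 'a" and Q :: "nat set"
  assumes A: "alt_algebra_inv mul one cj"
    and QS: "\<forall>s\<in>Q. v s \<in> SA mul one cj"
    and Qanti: "\<forall>s\<in>Q. \<forall>t\<in>Q. s \<noteq> t \<longrightarrow> mul (v s) (v t) = - mul (v t) (v s)"
    and Qfin: "finite Q"
begin

lemma B: "bilinear mul" using A by (rule alg_bil)

lemma ml_simps:
  "mul (a + b) c = mul a c + mul b c"
  "mul a (b + c) = mul a b + mul a c"
  "mul (a - b) c = mul a c - mul b c"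
  "mul a (b - c) = mul a b - mul a c"
  "mul (- a) c = - mul a c"
  "mul a (- c) = - mul a c"
  "mul (k *\<^sub>R a) c = k *\<^sub>R mul a c"
  "mul a (k *\<^sub>R c) = k *\<^sub>R mul a c"
  "mul 0 c = 0"
  "mul a 0 = 0"
  using B by (simp_all add: bilinear_ladd bilinear_radd bilinear_lsub bilinear_rsub
     bilinear_lneg bilinear_rneg bilinear_lmul bilinear_rmul bilinear_lzero bilinear_rzero)

lemma msumL: "mul (\<Sum>s\<in>S. g s) z = (\<Sum>s\<in>S. mul (g s) z)"
proof -
  have "linear (\<lambda>x. mul x z)" using B by (simp add: bilinear_def)
  thus ?thesis by (rule linear_sum)
qed

lemma msumR: "mul z (\<Sum>s\<in>S. g s) = (\<Sum>s\<in>S. mul z (g s))"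
proof -
  have "linear (\<lambda>x. mul z x)" using B by (simp add: bilinear_def)
  thus ?thesis by (rule linear_sum)
qed

lemma K1: "i \<in> Q \<Longrightarrow> mul (v i) (mul (v i) z) = - z"
proof -
  assume i: "i \<in> Q"
  have "mul (v i) (mul (v i) z) = mul (mul (v i) (v i)) z" by (rule alg_left[OF A])
  also have "mul (v i) (v i) = - one" using i QS alg_SA[OF A] by blast
  finally show ?thesis using alg_one[OF A] by (simp add: ml_simps)
qed

lemma K2: "i \<in> Q \<Longrightarrow> j \<in> Q \<Longrightarrow> i \<noteq> j \<Longrightarrow> mul (v i) (mul (v j) z) = - mul (v j) (mul (v i) z)"
proof -
  assume "i \<in> Q" "j \<in> Q" "i \<noteq> j"
  hence "mul (v i) (v j) = - mul (v j) (v i)" using Qanti by blast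
  hence "mul (v i) (v j) + mul (v j) (v i) = 0" by simp
  hence "mul (v i) (mul (v j) z) + mul (v j) (mul (v i) z) = 0" using alg_lin[OF A, of "v i" "v j" z] by (simp add: ml_simps)
  thus ?thesis by (simp add: eq_neg_iff_add_eq_0)
qed

lemma K2': "i \<in> Q \<Longrightarrow> j \<in> Q \<Longrightarrow> i \<noteq> j \<Longrightarrow> k *\<^sub>R mul (v i) (mul (v j) z) + k *\<^sub>R mul (v j) (mul (v i) z) = 0"
  using K2[of i j z] by simp

lemma K4: "i \<in> Q \<Longrightarrow> j \<in> Q \<Longrightarrow> mul (v i) (mul (v j) (mul (v i) z)) = mul (v j) z - (if i = j then 2 *\<^sub>R mul (v i) z else 0)"
proof (cases "i = j")
  case True
  assume "i \<in> Q" "j \<in> Q"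
  thus ?thesis using True K1 ml_simps by (simp add: scaleR_2)
next
  case False
  assume i: "i \<in> Q" and j: "j \<in> Q"
  have "mul (v i) (mul (v j) (mul (v i) z)) = - mul (v j) (mul (v i) (mul (v i) z))"
    using K2[OF i j False] .
  also have "\<dots> = mul (v j) z" using K1[OF i] by (simp add: ml_simps)
  finally show ?thesis using False by simp
qed

lemma K3: "mul (\<Sum>s\<in>Q. c s *\<^sub>R v s) (mul (\<Sum>s\<in>Q. c s *\<^sub>R v s) z) = - (\<Sum>s\<in>Q. (c s)\<^sup>2) *\<^sub>R z"
proof -
  have "mul (\<Sum>s\<in>Q. c s *\<^sub>R v s) (mul (\<Sum>s\<in>Q. c s *\<^sub>R v s) z)
      = (\<Sum>i\<in>Q. \<Sum>j\<in>Q. (c i * c j) *\<^sub>R mul (v i) (mul (v j) z))"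
    by (simp add: msumL msumR ml_simps scaleR_sum_right) (subst sum.swap, simp add: mult.commute)
  also have "\<dots> = (\<Sum>i\<in>Q. (c i * c i) *\<^sub>R mul (v i) (mul (v i) z))"
    by (rule dsum_anti[OF Qfin]) (simp add: K2' mult.commute)
  also have "\<dots> = (\<Sum>i\<in>Q. - ((c i)\<^sup>2 *\<^sub>R z))"
    by (intro sum.cong refl) (simp add: K1 power2_eq_square)
  also have "\<dots> = - (\<Sum>s\<in>Q. (c s)\<^sup>2) *\<^sub>R z"
    by (simp add: sum_negf scaleR_sum_left)
  finally show ?thesis .
qed

end




lemma slice_deriv:
  fixes mul :: "'a::euclidean_space \<Rightarrow> 'a \<Rightarrow> 'a" and F1 F2 :: "'a \<times> real \<Rightarrow> 'a"
    and f :: "'a \<Rightarrow> 'a" and h W :: "real \<Rightarrow> 'a" and \<rho> :: "real \<Rightarrow> real"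
    and Y Sph :: "'a set" and D :: "('a \<times> real) set"
  assumes B: "bilinear mul"
  and Dopen: "openin (top_of_set (Y \<times> (UNIV::real set))) D"
  and yr: "(y, \<rho> t0) \<in> D" and y: "y \<in> Y" and rpos: "\<rho> t0 > 0"
  and rho: "(\<rho> has_real_derivative \<rho>') (at t0)"
  and Wd: "(W has_vector_derivative W') (at t0)"
  and hW: "\<forall>t. \<rho> t > 0 \<longrightarrow> W t \<in> Sph \<and> h t = y + \<rho> t *\<^sub>R W t"
  and fs: "\<forall>y r w. (y, r) \<in> D \<and> r \<ge> 0 \<and> w \<in> Sph \<longrightarrow> f (y + r *\<^sub>R w) = F1 (y, r) + mul w (F2 (y, r))"
  and F1d: "((\<lambda>s. F1 ((y, \<rho> t0) + s *\<^sub>R (0,1))) has_vector_derivative F1') (at 0)"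
  and F2d: "((\<lambda>s. F2 ((y, \<rho> t0) + s *\<^sub>R (0,1))) has_vector_derivative F2') (at 0)"
  shows "((\<lambda>t. f (h t)) has_vector_derivative (\<rho>' *\<^sub>R F1' + mul W' (F2 (y, \<rho> t0)) + mul (W t0) (\<rho>' *\<^sub>R F2'))) (at t0)"
proof -
  obtain T where T: "open T" "D = (Y \<times> UNIV) \<inter> T" using Dopen by (auto simp: openin_open)
  have cont: "isCont \<rho> t0" using rho by (rule DERIV_isCont)
  have tl: "((\<lambda>t. (y, \<rho> t)) \<longlongrightarrow> (y, \<rho> t0)) (at t0)"
    using cont by (intro tendsto_intros) (simp add: isCont_def)
  have ev1: "\<forall>\<^sub>F t in at t0. (y, \<rho> t) \<in> T" using topological_tendstoD[OF tl T(1)] yr T(2) by auto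
  have ev2: "\<forall>\<^sub>F t in at t0. \<rho> t > 0" using order_tendstoD(1)[OF cont[unfolded isCont_def] rpos] .
  define g where "g t = F1 (y, \<rho> t) + mul (W t) (F2 (y, \<rho> t))" for t
  have pt: "f (h t) = g t" if "(y, \<rho> t) \<in> T" "\<rho> t > 0" for t
    using that hW fs T(2) y unfolding g_def by (metis IntI SigmaI UNIV_I less_imp_le)
  have ev3: "\<forall>\<^sub>F t in at t0. f (h t) = g t" using ev1 ev2 by eventually_elim (rule pt)
  have p0: "f (h t0) = g t0" using pt[of t0] yr T(2) rpos by auto
  have ev: "\<forall>\<^sub>F t in nhds t0. t \<in> UNIV \<longrightarrow> f (h t) = g t"
  proof -
    show ?thesis using ev3 unfolding eventually_at_filter
      by eventually_elim (use p0 in auto)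
  qed
  have r1: "((\<lambda>t. \<rho> t - \<rho> t0) has_vector_derivative \<rho>') (at t0)"
    using DERIV_diff[OF rho DERIV_const[of "\<rho> t0"]]
    by (simp add: has_real_derivative_iff_has_vector_derivative)
  have G1: "((\<lambda>t. F1 (y, \<rho> t)) has_vector_derivative \<rho>' *\<^sub>R F1') (at t0)"
    using vector_diff_chain_at[OF r1, of "\<lambda>s. F1 ((y, \<rho> t0) + s *\<^sub>R (0,1))" F1'] F1d
    by (simp add: o_def)
  have G2: "((\<lambda>t. F2 (y, \<rho> t)) has_vector_derivative \<rho>' *\<^sub>R F2') (at t0)"
    using vector_diff_chain_at[OF r1, of "\<lambda>s. F2 ((y, \<rho> t0) + s *\<^sub>R (0,1))" F2'] F2d
    by (simp add: o_def)
  have bb: "bounded_bilinear mul" using B bilinear_conv_bounded_bilinear by blast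
  have G3: "((\<lambda>t. mul (W t) (F2 (y, \<rho> t))) has_vector_derivative
      (mul (W t0) (\<rho>' *\<^sub>R F2') + mul W' (F2 (y, \<rho> t0)))) (at t0)"
    using bounded_bilinear.has_vector_derivative[OF bb Wd G2] .
  have "(g has_vector_derivative (\<rho>' *\<^sub>R F1' + mul W' (F2 (y, \<rho> t0)) + mul (W t0) (\<rho>' *\<^sub>R F2'))) (at t0)"
    unfolding g_def using has_vector_derivative_add[OF G1 G3] by (simp add: ac_simps)
  thus ?thesis
    using has_vector_derivative_cong_ev[OF ev p0] by simp
qed



lemma span_repr:
  fixes v :: "nat \<Rightarrow> 'a::real_vector"
  assumes "finite I" "inj_on v I" "z \<in> span (v ` I)"
  shows "\<exists>d. z = (\<Sum>s\<in>I. d s *\<^sub>R v s)"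
proof -
  obtain c where "z = (\<Sum>u\<in>v ` I. c u *\<^sub>R u)"
    using assms(3) span_finite[of "v ` I"] assms(1) by auto
  also have "\<dots> = (\<Sum>s\<in>I. c (v s) *\<^sub>R v s)" using assms(2) by (simp add: sum.reindex)
  finally show ?thesis by (intro exI[of _ "\<lambda>s. c (v s)"])
qed

lemma coeff_unique:
  fixes v :: "nat \<Rightarrow> 'a::real_vector"
  assumes "finite I" "inj_on v I" "independent (v ` I)"
    and "(\<Sum>s\<in>I. a s *\<^sub>R v s) = (\<Sum>s\<in>I. b s *\<^sub>R v s)" and "s \<in> I"
  shows "a s = b s"
proof (rule ccontr)
  assume ne: "a s \<noteq> b s"
  define u where "u w = a (the_inv_into I v w) - b (the_inv_into I v w)" for w
  have "(\<Sum>w\<in>v ` I. u w *\<^sub>R w) = (\<Sum>s\<in>I. u (v s) *\<^sub>R v s)" using assms(2) by (simp add: sum.reindex)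
  also have "\<dots> = (\<Sum>s\<in>I. (a s - b s) *\<^sub>R v s)"
    using assms(2) by (intro sum.cong refl) (simp add: u_def the_inv_into_f_f)
  also have "\<dots> = 0" using assms(4) by (simp add: scaleR_left_diff_distrib sum_subtractf)
  finally have "(\<Sum>w\<in>v ` I. u w *\<^sub>R w) = 0" .
  moreover have "u (v s) \<noteq> 0" using ne assms(2,5) by (simp add: u_def the_inv_into_f_f)
  ultimately have "dependent (v ` I)" using dependent_finite[of "v ` I"] assms(1,5) by blast
  thus False using assms(3) by simp
qed



theorem proposition4p6:
  fixes mul :: "'a::euclidean_space \<Rightarrow> 'a \<Rightarrow> 'a"
    and one :: 'a and cj :: "'a \<Rightarrow> 'a"
    and v :: "nat \<Rightarrow> 'a" and m p :: nat
    and D :: "('a \<times> real) set"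
    and F1 F2 :: "'a \<times> real \<Rightarrow> 'a" and f :: "'a \<Rightarrow> 'a"
  assumes alg: "alt_algebra_inv mul one cj"
    and dim: "DIM('a) > 1"
    and SA_ne: "SA mul one cj \<noteq> {}"
    and m1: "m \<ge> 1"
    and basis_indep: "independent (v ` {0..m})" and basis_inj: "inj_on v {0..m}"
    and v0: "v 0 = one"
    and vS: "\<forall>s\<in>{1..m}. v s \<in> SA mul one cj"
    and vanti: "\<forall>s\<in>{1..m}. \<forall>t\<in>{1..m}. s \<noteq> t \<longrightarrow> mul (v s) (v t) = - mul (v t) (v s)"
    and MQ: "span (v ` {0..m}) \<subseteq> QA mul one cj"
    and pm: "p < m"
    and D_sub: "D \<subseteq> span (v ` {0..p}) \<times> UNIV"
    and D_open: "openin (top_of_set (span (v ` {0..p}) \<times> (UNIV :: real set))) D"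
    and D_sym: "\<forall>y r. (y, r) \<in> D \<longrightarrow> (y, - r) \<in> D"
    and F1_even: "\<forall>y r. (y, r) \<in> D \<longrightarrow> F1 (y, - r) = F1 (y, r)"
    and F2_odd: "\<forall>y r. (y, r) \<in> D \<longrightarrow> F2 (y, - r) = - F2 (y, r)"
    and F1_C1: "C1_dirs ((\<lambda>s. (v s, 0)) ` {0..p} \<union> {(0, 1)}) D F1"
    and F2_C1: "C1_dirs ((\<lambda>s. (v s, 0)) ` {0..p} \<union> {(0, 1)}) D F2"
    and f_slice: "\<forall>y r w. (y, r) \<in> D \<and> r \<ge> 0 \<and> w \<in> sphq v p m \<longrightarrow>
                    f (y + r *\<^sub>R w) = F1 (y, r) + mul w (F2 (y, r))"
    and f_C1: "C1_dirs (v ` {0..m}) (OmegaD v p m D) f"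
  shows "\<forall>xc. pt v m xc \<in> OmegaD v p m D \<and> pt v m xc \<notin> span (v ` {0..p}) \<longrightarrow>
           Gamma_op mul v p m f xc
             = (real (m - p) - 1) *\<^sub>R mul (xqpart v p m xc) (sph_deriv mul one v p m f xc)
         \<and> Dx_op mul v m f xc - Domega_op mul v p m f xc
             = (1 - real (m - p)) *\<^sub>R sph_deriv mul one v p m f xc"
proof (intro allI impI)
  fix xc assume H: "pt v m xc \<in> OmegaD v p m D \<and> pt v m xc \<notin> span (v ` {0..p})"
  define Q where "Q = {p+1..m}"
  have QS: "\<forall>s\<in>Q. v s \<in> SA mul one cj" using vS unfolding Q_def by auto
  have Qanti: "\<forall>s\<in>Q. \<forall>t\<in>Q. s \<noteq> t \<longrightarrow> mul (v s) (v t) = - mul (v t) (v s)"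
  proof -
    have "Q \<subseteq> {1..m}" unfolding Q_def by auto
    thus ?thesis using vanti by blast
  qed
  interpret actx mul one cj v Q
    by unfold_locales (fact alg, fact QS, fact Qanti, simp add: Q_def)
  have cardQ: "card Q = m - p" unfolding Q_def by simp
  define y where "y = xpart v p xc"
  define X where "X = xqpart v p m xc"
  define r where "r = rad p m xc"
  have Xdef: "X = (\<Sum>s\<in>Q. xc s *\<^sub>R v s)" unfolding X_def xqpart_def Q_def ..
  have split: "(\<Sum>s\<in>{0..m}. g s) = (\<Sum>s\<in>{0..p}. g s) + (\<Sum>s\<in>Q. g s)" for g :: "nat \<Rightarrow> 'a"
  proof -
    have "{0..m} = {0..p} \<union> Q" unfolding Q_def using pm by auto
    moreover have "{0..p} \<inter> Q = {}" unfolding Q_def by auto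
    ultimately show ?thesis using Qfin by (simp add: sum.union_disjoint)
  qed
  have ptsplit: "pt v m xc = y + X" unfolding pt_def y_def X_def xpart_def xqpart_def
    using split Q_def by simp

  have B: "bilinear mul" by (rule B)
  obtain y' r' w' where o1: "pt v m xc = y' + r' *\<^sub>R w'" "(y', r') \<in> D" "r' \<ge> 0" "w' \<in> sphq v p m"
    using H unfolding OmegaD_def by blast
  obtain c where c: "w' = (\<Sum>s\<in>Q. c s *\<^sub>R v s)" "(\<Sum>s\<in>Q. (c s)\<^sup>2) = 1"
    using o1(4) unfolding sphq_def Q_def by blast
  have y'sp: "y' \<in> span (v ` {0..p})" using o1(2) D_sub by auto
  have injp: "inj_on v {0..p}" using basis_inj pm by (auto intro: inj_on_subset)
  obtain d where d: "y' = (\<Sum>s\<in>{0..p}. d s *\<^sub>R v s)"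
    using span_repr[OF _ injp y'sp] by auto
  define e where "e s = (if s \<le> p then d s else r' * c s)" for s
  have "(\<Sum>s\<in>{0..m}. e s *\<^sub>R v s) = (\<Sum>s\<in>{0..p}. e s *\<^sub>R v s) + (\<Sum>s\<in>Q. e s *\<^sub>R v s)"
    by (rule split)
  also have "(\<Sum>s\<in>{0..p}. e s *\<^sub>R v s) = y'" unfolding d e_def by (intro sum.cong) auto
  also have "(\<Sum>s\<in>Q. e s *\<^sub>R v s) = r' *\<^sub>R w'" unfolding c e_def Q_def
    by (auto simp: scaleR_sum_right intro!: sum.cong)
  finally have "(\<Sum>s\<in>{0..m}. xc s *\<^sub>R v s) = (\<Sum>s\<in>{0..m}. e s *\<^sub>R v s)"
    using o1(1) unfolding pt_def by simp
  hence xce: "xc s = e s" if "s \<in> {0..m}" for s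
    using coeff_unique[OF _ basis_inj basis_indep _ that] by blast
  have yy: "y = y'" unfolding y_def xpart_def d using xce e_def pm
    by (intro sum.cong) auto
  have XX': "X = r' *\<^sub>R w'" unfolding Xdef c using xce e_def
    by (auto simp: scaleR_sum_right Q_def intro!: sum.cong)
  have sq: "(\<Sum>s\<in>Q. (xc s)\<^sup>2) = r'\<^sup>2"
  proof -
    have "(\<Sum>s\<in>Q. (xc s)\<^sup>2) = (\<Sum>s\<in>Q. r'\<^sup>2 * (c s)\<^sup>2)" using xce e_def
      by (intro sum.cong) (auto simp: Q_def power_mult_distrib)
    also have "\<dots> = r'\<^sup>2" using c(2) by (simp add: sum_distrib_left[symmetric])
    finally show ?thesis .
  qed
  have rr: "r = r'" unfolding r_def rad_def using sq o1(3) by (simp add: Q_def)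
  have rpos: "r > 0"
  proof (rule ccontr)
    assume "\<not> r > 0"
    hence "r' = 0" using rr o1(3) by simp
    hence "pt v m xc = y'" using o1(1) by simp
    thus False using H y'sp by simp
  qed
  have yrD: "(y, r) \<in> D" using o1(2) yy rr by simp
  have r2: "(\<Sum>s\<in>Q. (xc s)\<^sup>2) = r\<^sup>2" using sq rr by simp
  have XXz: "mul X (mul X z) = - (r\<^sup>2) *\<^sub>R z" for z unfolding Xdef using K3 r2 by simp

  define w where "w = (1/r) *\<^sub>R X"
  have sph_mem: "(\<Sum>s\<in>Q. a s *\<^sub>R v s) \<in> sphq v p m" if "(\<Sum>s\<in>Q. (a s)\<^sup>2) = 1" for a
    using that unfolding sphq_def Q_def by blast
  have wsum: "w = (\<Sum>s\<in>Q. (xc s / r) *\<^sub>R v s)" unfolding w_def Xdef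
    by (simp add: scaleR_sum_right)
  have sq1: "(\<Sum>s\<in>Q. (xc s / r)\<^sup>2) = 1"
    using r2 rpos by (simp add: power_divide sum_divide_distrib[symmetric])
  have wsph: "w \<in> sphq v p m" using sph_mem[OF sq1] wsum by simp
  have mwsph: "- w \<in> sphq v p m"
  proof -
    have "(\<Sum>s\<in>Q. (- (xc s / r))\<^sup>2) = 1" using sq1 by simp
    from sph_mem[OF this] show ?thesis using wsum by (simp add: sum_negf)
  qed
  have Xw: "X = r *\<^sub>R w" unfolding w_def using rpos by simp
  define F where "F = F2 (y, r)"
  define F1' where "F1' = pdir F1 (0,1) (y, r)"
  define F2' where "F2' = pdir F2 (0,1) (y, r)"
  have dirin: "(0::'a, 1::real) \<in> (\<lambda>s. (v s, 0)) ` {0..p} \<union> {(0, 1)}" by simp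
  have F1d: "((\<lambda>s. F1 ((y, r) + s *\<^sub>R (0,1))) has_vector_derivative F1') (at 0)"
  proof -
    have "(\<lambda>t. F1 ((y,r) + t *\<^sub>R (0,1))) differentiable at 0"
      using F1_C1 dirin yrD unfolding C1_dirs_def by blast
    thus ?thesis unfolding F1'_def pdir_def using vector_derivative_works by blast
  qed
  have F2d: "((\<lambda>s. F2 ((y, r) + s *\<^sub>R (0,1))) has_vector_derivative F2') (at 0)"
  proof -
    have "(\<lambda>t. F2 ((y,r) + t *\<^sub>R (0,1))) differentiable at 0"
      using F2_C1 dirin yrD unfolding C1_dirs_def by blast
    thus ?thesis unfolding F2'_def pdir_def using vector_derivative_works by blast
  qed
  have ysp: "y \<in> span (v ` {0..p})" using yrD D_sub by auto
  have fval: "f (pt v m xc) = F1 (y, r) + mul w F"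
    using f_slice yrD rpos wsph ptsplit Xw unfolding F_def by auto
  have fval2: "f (y - X) = F1 (y, r) - mul w F"
  proof -
    have "f (y + r *\<^sub>R (- w)) = F1 (y, r) + mul (- w) F"
      using f_slice yrD rpos mwsph unfolding F_def by (metis less_imp_le)
    thus ?thesis using Xw by (simp add: ml_simps)
  qed
  have Dw: "vector_derivative (\<lambda>t. f (y + t *\<^sub>R w)) (at r) = F1' + mul w F2'"
  proof -
    have "((\<lambda>t. f (y + t *\<^sub>R w)) has_vector_derivative
       (1 *\<^sub>R F1' + mul 0 (F2 (y, (\<lambda>t. t) r)) + mul w (1 *\<^sub>R F2'))) (at r)"
      by (rule slice_deriv[OF B D_open _ ysp, where \<rho>="\<lambda>t. t" and W="\<lambda>t. w"])
         (use yrD rpos wsph f_slice F1d F2d in \<open>auto intro: derivative_eq_intros\<close>)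
    thus ?thesis by (simp add: vector_derivative_at ml_simps)
  qed

  have Dj: "pdir f (v j) (pt v m xc) = (xc j / r) *\<^sub>R F1'
      + mul (inverse r *\<^sub>R v j - (xc j / r^3) *\<^sub>R X) F + mul w ((xc j / r) *\<^sub>R F2')"
    if jQ: "j \<in> Q" for j
  proof -
    define \<rho> where "\<rho> t = sqrt (r\<^sup>2 + 2 * t * xc j + t\<^sup>2)" for t
    define W where "W t = inverse (\<rho> t) *\<^sub>R (X + t *\<^sub>R v j)" for t
    have \<rho>0: "\<rho> 0 = r" unfolding \<rho>_def using rpos by simp
    have d\<rho>: "(\<rho> has_real_derivative (xc j / r)) (at 0)"
    proof -
      have g: "((\<lambda>t. r\<^sup>2 + 2 * t * xc j + t\<^sup>2) has_real_derivative (2 * xc j)) (at 0)"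
        by (auto intro!: derivative_eq_intros)
      have s: "DERIV sqrt (r\<^sup>2 + 2 * 0 * xc j + 0\<^sup>2) :> inverse (sqrt (r\<^sup>2 + 2 * 0 * xc j + 0\<^sup>2)) / 2"
        by (rule DERIV_real_sqrt) (use rpos in simp)
      have "((\<lambda>t. sqrt (r\<^sup>2 + 2 * t * xc j + t\<^sup>2)) has_real_derivative (inverse (sqrt (r\<^sup>2 + 2 * 0 * xc j + 0\<^sup>2)) / 2 * (2 * xc j))) (at 0)"
        using DERIV_chain2[OF s g] .
      hence "(\<rho> has_real_derivative (inverse (sqrt (r\<^sup>2 + 2 * 0 * xc j + 0\<^sup>2)) / 2 * (2 * xc j))) (at 0)"
        unfolding \<rho>_def[abs_def] .
      moreover have "sqrt (r\<^sup>2 + 2 * 0 * xc j + 0\<^sup>2) = r" using rpos by simp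
      ultimately show ?thesis using rpos by (simp add: field_simps)
    qed
    have dlin: "((\<lambda>t. X + t *\<^sub>R v j) has_vector_derivative v j) (at 0)"
      by (auto intro!: derivative_eq_intros)
    have dW: "(W has_vector_derivative
        (inverse (\<rho> 0) *\<^sub>R v j + (- (xc j / r * inverse (\<rho> 0 ^ Suc (Suc 0)))) *\<^sub>R (X + 0 *\<^sub>R v j))) (at 0)"
      unfolding W_def
      by (rule has_vector_derivative_scaleR[OF DERIV_inverse_fun[OF d\<rho>] dlin]) (use \<rho>0 rpos in simp)
    have sqsum: "(\<Sum>s\<in>Q. (xc s + (if s = j then t else 0))\<^sup>2) = r\<^sup>2 + 2 * t * xc j + t\<^sup>2" for t
    proof -
      have "(\<Sum>s\<in>Q. (xc s + (if s = j then t else 0))\<^sup>2)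
          = (\<Sum>s\<in>Q. (xc s)\<^sup>2 + (if s = j then 2 * t * xc j + t\<^sup>2 else 0))"
        by (intro sum.cong refl) (auto simp: power2_eq_square algebra_simps)
      also have "\<dots> = r\<^sup>2 + 2 * t * xc j + t\<^sup>2" using r2 jQ Qfin by (simp add: sum.distrib)
      finally show ?thesis .
    qed
    have hW: "\<forall>t. \<rho> t > 0 \<longrightarrow> W t \<in> sphq v p m \<and> pt v m xc + t *\<^sub>R v j = y + \<rho> t *\<^sub>R W t"
    proof (intro allI impI conjI)
      fix t assume pos: "\<rho> t > 0"
      have arg: "r\<^sup>2 + 2 * t * xc j + t\<^sup>2 > 0" using pos unfolding \<rho>_def by simp
      have \<rho>sq: "(\<rho> t)\<^sup>2 = r\<^sup>2 + 2 * t * xc j + t\<^sup>2" unfolding \<rho>_def using arg by simp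
      define a where "a s = (xc s + (if s = j then t else 0)) / \<rho> t" for s
      have "(\<Sum>s\<in>Q. (a s)\<^sup>2) = (\<Sum>s\<in>Q. (xc s + (if s = j then t else 0))\<^sup>2) / (\<rho> t)\<^sup>2"
        unfolding a_def by (simp add: power_divide sum_divide_distrib)
      also have "\<dots> = 1" using sqsum \<rho>sq pos arg by simp
      finally have a1: "(\<Sum>s\<in>Q. (a s)\<^sup>2) = 1" .
      have "(\<Sum>s\<in>Q. a s *\<^sub>R v s) = inverse (\<rho> t) *\<^sub>R (\<Sum>s\<in>Q. (xc s + (if s = j then t else 0)) *\<^sub>R v s)"
        unfolding a_def by (simp add: scaleR_sum_right divide_inverse mult.commute)
      also have "(\<Sum>s\<in>Q. (xc s + (if s = j then t else 0)) *\<^sub>R v s) = X + t *\<^sub>R v j"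
        unfolding Xdef using jQ Qfin by (simp add: scaleR_left_distrib sum.distrib if_distrib[of "\<lambda>c. c *\<^sub>R _"] cong: if_cong)
      finally have "(\<Sum>s\<in>Q. a s *\<^sub>R v s) = W t" unfolding W_def .
      thus "W t \<in> sphq v p m" using sph_mem[OF a1] by simp
      show "pt v m xc + t *\<^sub>R v j = y + \<rho> t *\<^sub>R W t"
        unfolding W_def ptsplit using pos by simp
    qed
    have yr0: "(y, \<rho> 0) \<in> D" using yrD \<rho>0 by simp
    have r0pos: "0 < \<rho> 0" using rpos \<rho>0 by simp
    have F1d': "((\<lambda>s. F1 ((y, \<rho> 0) + s *\<^sub>R (0,1))) has_vector_derivative F1') (at 0)"
      using F1d unfolding \<rho>0 .
    have F2d': "((\<lambda>s. F2 ((y, \<rho> 0) + s *\<^sub>R (0,1))) has_vector_derivative F2') (at 0)"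
      using F2d unfolding \<rho>0 .
    have "((\<lambda>t. f (pt v m xc + t *\<^sub>R v j)) has_vector_derivative
      ((xc j / r) *\<^sub>R F1' + mul (inverse (\<rho> 0) *\<^sub>R v j + (- (xc j / r * inverse (\<rho> 0 ^ Suc (Suc 0)))) *\<^sub>R (X + 0 *\<^sub>R v j)) (F2 (y, \<rho> 0))
        + mul (W 0) ((xc j / r) *\<^sub>R F2'))) (at 0)"
      by (rule slice_deriv[OF B D_open yr0 ysp r0pos d\<rho> dW hW f_slice F1d' F2d'])
    moreover have "W 0 = w" unfolding W_def w_def \<rho>0 by (simp add: divide_inverse)
    moreover have "xc j / r * inverse (r ^ Suc (Suc 0)) = xc j / r^3"
      using rpos by (simp add: field_simps power3_eq_cube power2_eq_square)
    ultimately have "((\<lambda>t. f (pt v m xc + t *\<^sub>R v j)) has_vector_derivative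
      ((xc j / r) *\<^sub>R F1' + mul (inverse r *\<^sub>R v j - (xc j / r^3) *\<^sub>R X) F + mul w ((xc j / r) *\<^sub>R F2'))) (at 0)"
      using \<rho>0 unfolding F_def by (simp add: ml_simps)
    thus ?thesis unfolding pdir_def by (rule vector_derivative_at)
  qed

  have Xone: "mul X X = - (r\<^sup>2) *\<^sub>R one"
    using XXz[of one] alg_one[OF alg] by simp
  have ainvX: "ainv mul one X = (- inverse (r\<^sup>2)) *\<^sub>R X"
    unfolding ainv_def
  proof (rule the_equality)
    show "mul X ((- inverse (r\<^sup>2)) *\<^sub>R X) = one \<and> mul ((- inverse (r\<^sup>2)) *\<^sub>R X) X = one"
      using Xone rpos by (simp add: ml_simps)
  next
    fix z assume z: "mul X z = one \<and> mul z X = one"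
    have "X = mul X (mul X z)" using z alg_one[OF alg] by simp
    also have "\<dots> = - (r\<^sup>2) *\<^sub>R z" by (rule XXz)
    finally have "X = - (r\<^sup>2) *\<^sub>R z" .
    thus "z = (- inverse (r\<^sup>2)) *\<^sub>R X" using rpos by simp
  qed
  have sphd: "sph_deriv mul one v p m f xc = inverse r *\<^sub>R F"
  proof -
    have "f (pt v m xc) - f (y - X) = 2 *\<^sub>R mul w F" using fval fval2 by (simp add: scaleR_2)
    hence "sph_deriv mul one v p m f xc = (1/2) *\<^sub>R mul ((- inverse (r\<^sup>2)) *\<^sub>R X) (2 *\<^sub>R mul w F)"
      unfolding sph_deriv_def ainvX[unfolded X_def] y_def X_def by simp
    also have "\<dots> = (- inverse (r\<^sup>2) * (1 / r)) *\<^sub>R mul X (mul X F)"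
      unfolding w_def by (simp add: ml_simps)
    also have "\<dots> = inverse r *\<^sub>R F" using rpos unfolding XXz
      by (simp add: field_simps power2_eq_square)
    finally show ?thesis .
  qed
  define a where "a s = mul (v s) F" for s
  define XF where "XF = (\<Sum>s\<in>Q. xc s *\<^sub>R a s)"
  have XF: "mul X F = XF" unfolding Xdef XF_def a_def by (simp add: msumL ml_simps)
  have Lij: "xc i *\<^sub>R pdir f (v j) (pt v m xc) - xc j *\<^sub>R pdir f (v i) (pt v m xc)
      = (1/r) *\<^sub>R (xc i *\<^sub>R mul (v j) F - xc j *\<^sub>R mul (v i) F)" if i: "i \<in> Q" and j: "j \<in> Q" for i j
    unfolding Dj[OF i] Dj[OF j] by (simp add: ml_simps algebra_simps) (simp add: divide_inverse mult.commute add.commute)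
  have T: "mul (v i) (mul (v j) (xc i *\<^sub>R pdir f (v j) (pt v m xc) - xc j *\<^sub>R pdir f (v i) (pt v m xc)))
      = (1/r) *\<^sub>R ((- xc i) *\<^sub>R a i + (- xc j) *\<^sub>R a j + (if j = i then (2 * xc i) *\<^sub>R a i else 0))"
    if i: "i \<in> Q" and j: "j \<in> Q" for i j
  proof -
    have "mul (v i) (mul (v j) (xc i *\<^sub>R pdir f (v j) (pt v m xc) - xc j *\<^sub>R pdir f (v i) (pt v m xc)))
      = (1/r) *\<^sub>R (xc i *\<^sub>R mul (v i) (mul (v j) (mul (v j) F)) - xc j *\<^sub>R mul (v i) (mul (v j) (mul (v i) F)))"
      unfolding Lij[OF i j] by (simp add: ml_simps)
    also have "\<dots> = (1/r) *\<^sub>R (xc i *\<^sub>R (- a i) - xc j *\<^sub>R (a j - (if i = j then 2 *\<^sub>R a i else 0)))"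
      unfolding K1[OF j] K4[OF i j] a_def by (simp add: ml_simps)
    also have "\<dots> = (1/r) *\<^sub>R ((- xc i) *\<^sub>R a i + (- xc j) *\<^sub>R a j + (if j = i then (2 * xc i) *\<^sub>R a i else 0))"
      by (cases "i = j") (simp_all add: algebra_simps)
    finally show ?thesis .
  qed
  have inner: "(\<Sum>j\<in>Q. (- xc i) *\<^sub>R a i + (- xc j) *\<^sub>R a j + (if j = i then (2 * xc i) *\<^sub>R a i else 0))
      = (real (card Q) * - xc i) *\<^sub>R a i - XF + (2 * xc i) *\<^sub>R a i" if i: "i \<in> Q" for i
    using i Qfin unfolding XF_def by (simp add: sum.distrib sum_negf sum.delta sum_subtractf sum_constant_scaleR)
  have outer: "(\<Sum>i\<in>Q. (real (card Q) * - xc i) *\<^sub>R a i - XF + (2 * xc i) *\<^sub>R a i)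
      = (2 - 2 * real (card Q)) *\<^sub>R XF"
  proof -
    have "(\<Sum>i\<in>Q. (real (card Q) * - xc i) *\<^sub>R a i - XF + (2 * xc i) *\<^sub>R a i)
        = (- real (card Q)) *\<^sub>R XF - real (card Q) *\<^sub>R XF + 2 *\<^sub>R XF"
    proof -
      have e1: "(\<Sum>i\<in>Q. (real (card Q) * - xc i) *\<^sub>R a i) = (- real (card Q)) *\<^sub>R XF"
        unfolding XF_def scaleR_sum_right by (intro sum.cong refl) simp
      have e2: "(\<Sum>i\<in>Q. (2 * xc i) *\<^sub>R a i) = 2 *\<^sub>R XF"
        unfolding XF_def scaleR_sum_right by (intro sum.cong refl) simp
      have e3: "(\<Sum>i\<in>Q. XF) = real (card Q) *\<^sub>R XF" by (simp add: sum_constant_scaleR)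
      show ?thesis unfolding sum.distrib sum_subtractf e1 e2 e3 ..
    qed
    also have "\<dots> = (2 - 2 * real (card Q)) *\<^sub>R XF" by (simp add: algebra_simps flip: scaleR_2)
    finally show ?thesis .
  qed
  have G: "Gamma_op mul v p m f xc
             = (real (m - p) - 1) *\<^sub>R mul (xqpart v p m xc) (sph_deriv mul one v p m f xc)"
  proof -
    have "Gamma_op mul v p m f xc = - (1/2) *\<^sub>R (\<Sum>i\<in>Q. \<Sum>j\<in>Q.
        (1/r) *\<^sub>R ((- xc i) *\<^sub>R a i + (- xc j) *\<^sub>R a j + (if j = i then (2 * xc i) *\<^sub>R a i else 0)))"
      unfolding Gamma_op_def Q_def[symmetric] using T by (intro arg_cong[where f="\<lambda>z. - (1/2) *\<^sub>R z"] sum.cong refl) auto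
    also have "\<dots> = - (1/2) *\<^sub>R ((1/r) *\<^sub>R (\<Sum>i\<in>Q. \<Sum>j\<in>Q.
        (- xc i) *\<^sub>R a i + (- xc j) *\<^sub>R a j + (if j = i then (2 * xc i) *\<^sub>R a i else 0)))"
      by (simp add: scaleR_sum_right)
    also have "(\<Sum>i\<in>Q. \<Sum>j\<in>Q. (- xc i) *\<^sub>R a i + (- xc j) *\<^sub>R a j + (if j = i then (2 * xc i) *\<^sub>R a i else 0))
        = (2 - 2 * real (card Q)) *\<^sub>R XF"
      using inner outer by simp
    also have "- (1/2) *\<^sub>R ((1/r) *\<^sub>R ((2 - 2 * real (card Q)) *\<^sub>R XF))
        = (real (m - p) - 1) *\<^sub>R mul X (inverse r *\<^sub>R F)"
    proof -
      have "- (1/2) *\<^sub>R ((1/r) *\<^sub>R ((2 - 2 * real (card Q)) *\<^sub>R XF))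
          = (- (1/2) * (1/r) * (2 - 2 * real (m - p))) *\<^sub>R XF" unfolding cardQ by simp
      also have "- (1/2) * (1/r) * (2 - 2 * real (m - p)) = (real (m - p) - 1) * inverse r"
        using rpos by (simp add: field_simps)
      also have "((real (m - p) - 1) * inverse r) *\<^sub>R XF = (real (m - p) - 1) *\<^sub>R mul X (inverse r *\<^sub>R F)"
        unfolding XF[symmetric] by (simp add: ml_simps)
      finally show ?thesis .
    qed
    finally show ?thesis unfolding sphd X_def .
  qed
  have MX: "(\<Sum>j\<in>Q. xc j *\<^sub>R mul (v j) Z) = mul X Z" for Z
    unfolding Xdef by (simp add: msumL ml_simps)
  have wX: "(1/r) *\<^sub>R mul X Z = mul w Z" for Z unfolding w_def by (simp add: ml_simps)
  have per: "mul (v j) (pdir f (v j) (pt v m xc)) = (1/r) *\<^sub>R (xc j *\<^sub>R mul (v j) F1') - inverse r *\<^sub>R F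
      - (1/r^3) *\<^sub>R (xc j *\<^sub>R mul (v j) (mul X F)) + (1/r) *\<^sub>R (xc j *\<^sub>R mul (v j) (mul w F2'))"
    if j: "j \<in> Q" for j
    unfolding Dj[OF j] by (simp add: ml_simps K1[OF j] divide_inverse mult.commute)
  have sumQ: "(\<Sum>j\<in>Q. mul (v j) (pdir f (v j) (pt v m xc)))
      = mul w F1' - (real (card Q) * inverse r) *\<^sub>R F + inverse r *\<^sub>R F + mul w (mul w F2')"
  proof -
    have "(\<Sum>j\<in>Q. mul (v j) (pdir f (v j) (pt v m xc)))
      = (\<Sum>j\<in>Q. (1/r) *\<^sub>R (xc j *\<^sub>R mul (v j) F1') - inverse r *\<^sub>R F
      - (1/r^3) *\<^sub>R (xc j *\<^sub>R mul (v j) (mul X F)) + (1/r) *\<^sub>R (xc j *\<^sub>R mul (v j) (mul w F2')))"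
      using per by (intro sum.cong refl) auto
    also have "\<dots> = (1/r) *\<^sub>R mul X F1' - real (card Q) *\<^sub>R inverse r *\<^sub>R F
      - (1/r^3) *\<^sub>R mul X (mul X F) + (1/r) *\<^sub>R mul X (mul w F2')"
      unfolding sum.distrib sum_subtractf scaleR_sum_right[symmetric] MX sum_constant_scaleR by simp
    also have "\<dots> = mul w F1' - (real (card Q) * inverse r) *\<^sub>R F + inverse r *\<^sub>R F + mul w (mul w F2')"
      unfolding wX XXz using rpos by (simp add: power2_eq_square power3_eq_cube field_simps)
    finally show ?thesis .
  qed
  have Dom: "Domega_op mul v p m f xc = (\<Sum>s\<in>{0..p}. mul (v s) (pdir f (v s) (pt v m xc))) + mul w (F1' + mul w F2')"
  proof -
    have e: "y + r *\<^sub>R w = pt v m xc" using ptsplit Xw by simp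
    show ?thesis unfolding Domega_op_def Let_def r_def[symmetric] X_def[symmetric] y_def[symmetric]
        w_def[symmetric] e Dw by simp
  qed
  have DD: "Dx_op mul v m f xc - Domega_op mul v p m f xc
             = (1 - real (m - p)) *\<^sub>R sph_deriv mul one v p m f xc"
  proof -
    have "Dx_op mul v m f xc - Domega_op mul v p m f xc
        = (\<Sum>j\<in>Q. mul (v j) (pdir f (v j) (pt v m xc))) - mul w (F1' + mul w F2')"
      unfolding Dx_op_def Dom split by simp
    also have "\<dots> = (1 - real (m - p)) *\<^sub>R (inverse r *\<^sub>R F)"
      unfolding sumQ cardQ by (simp add: ml_simps algebra_simps)
    finally show ?thesis unfolding sphd .
  qed
  show "Gamma_op mul v p m f xc
             = (real (m - p) - 1) *\<^sub>R mul (xqpart v p m xc) (sph_deriv mul one v p m f xc)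
         \<and> Dx_op mul v m f xc - Domega_op mul v p m f xc
             = (1 - real (m - p)) *\<^sub>R sph_deriv mul one v p m f xc" using G DD by simp
qed

end
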